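(* Let $(G,\sigma)$ be a connection graph. For any distinct $i,j\in V$, $r^\sigma_{ij}\le r_{ij}$.
   Context: A connection graph $(G,\sigma)$: finite connected weighted graph $G=(V,E,W)$, $V=\{1,\dots,n\}$, $w_{xy}>0$ iff $\{x,y\}\in E$, $\deg(x)=\sum_yw_{xy}$, and a $d$-dimensional signature $\sigma$ mapping oriented edges to $\mathsf{O}(d)$ with $\sigma_{yx}=\sigma_{xy}^{\mathrm T}$. $r_{ij}=(e_i-e_j)^{\mathrm T}L^\dagger(e_i-e_j)$ is the classical effective resistance, $L=D-W$. Connection Laplacian $\mathcal{L}$: $nd\times nd$ block matrix with blocks $\deg(x)I_d$ on the diagonal, $-w_{xy}\sigma_{xy}$ for $x\sim y$, $0$ otherwise. $\Omega^0_{ij}=\mathbb{E}[\prod_{\ell=1}^{T^0_j}\sigma_{X_{\ell-1}X_\ell}\mid X_0=i]$ for the simple random walk with transition probabilities $w_{xy}/\deg(x)$ and $T^0_j=\inf\{t\ge0:X_t=j\}$. $N_{ij}$: $nd\times d$ block column with $I_d$ at node $i$, $-(\Omega^0_{ij})^{\mathrm T}$ at node $j$, $0$ elsewhere; $\mathcal{W}_{i\to j}=\mathcal{L}^\dagger N_{ij}$. Connection effective resistance: $r^\sigma_{ij}=\frac{1}{2d}\operatorname{Tr}\big(\mathcal{W}_{i\to j}^{\mathrm T}\mathcal{L}\mathcal{W}_{i\to j}+\mathcal{W}_{j\to i}^{\mathrm T}\mathcal{L}\mathcal{W}_{j\to i}\big)$. *)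

theory Defs
  imports "HOL-Analysis.Analysis"
begin

text \<open>Vertices are the elements of a finite type 'n (playing the role of V = {1..n});
  the signature dimension d is CARD('d) for a finite type 'd.
  Weights are a function w :: 'n => 'n => real.\<close>

definition conn_graph :: "('n::finite \<Rightarrow> 'n \<Rightarrow> real) \<Rightarrow> ('n \<Rightarrow> 'n \<Rightarrow> real^'d::finite^'d) \<Rightarrow> bool" where
  "conn_graph w \<sigma> \<longleftrightarrow>
     (\<forall>x y. w x y = w y x) \<and> (\<forall>x y. w x y \<ge> 0) \<and> (\<forall>x. w x x = 0) \<and>
     (\<forall>x y. ((\<lambda>a b. w a b > 0)\<^sup>*\<^sup>*) x y) \<and>
     (\<forall>x y. w x y > 0 \<longrightarrow> orthogonal_matrix (\<sigma> x y) \<and> \<sigma> y x = transpose (\<sigma> x y))"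

definition gdeg :: "('n::finite \<Rightarrow> 'n \<Rightarrow> real) \<Rightarrow> 'n \<Rightarrow> real" where
  "gdeg w x = (\<Sum>y\<in>UNIV. w x y)"

text \<open>Moore--Penrose pseudoinverse, via the Penrose equations (it exists and is unique).\<close>
definition pinv :: "real^'n::finite^'m::finite \<Rightarrow> real^'m^'n" where
  "pinv A = (THE X. A ** X ** A = A \<and> X ** A ** X = X \<and>
                    transpose (A ** X) = A ** X \<and> transpose (X ** A) = X ** A)"

definition mtrace :: "real^'d::finite^'d \<Rightarrow> real" where
  "mtrace A = (\<Sum>a\<in>UNIV. A $ a $ a)"

definition lap :: "('n::finite \<Rightarrow> 'n \<Rightarrow> real) \<Rightarrow> real^'n^'n" where
  "lap w = (\<chi> x y. (if x = y then gdeg w x else 0) - w x y)"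

definition eff_res :: "('n::finite \<Rightarrow> 'n \<Rightarrow> real) \<Rightarrow> 'n \<Rightarrow> 'n \<Rightarrow> real" where
  "eff_res w i j = (let v = axis i (1::real) - axis j 1 in v \<bullet> (pinv (lap w) *v v))"

definition conn_lap :: "('n::finite \<Rightarrow> 'n \<Rightarrow> real) \<Rightarrow> ('n \<Rightarrow> 'n \<Rightarrow> real^'d::finite^'d) \<Rightarrow> real^('n \<times> 'd)^('n \<times> 'd)" where
  "conn_lap w \<sigma> = (\<chi> r c.
      (if r = c then gdeg w (fst r) else 0) - w (fst r) (fst c) * (\<sigma> (fst r) (fst c) $ snd r $ snd c))"

fun path_prob :: "('n::finite \<Rightarrow> 'n \<Rightarrow> real) \<Rightarrow> 'n list \<Rightarrow> real" where
  "path_prob w (x # y # p) = w x y / gdeg w x * path_prob w (y # p)"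
| "path_prob w _ = 1"

fun path_sig :: "('n \<Rightarrow> 'n \<Rightarrow> real^'d::finite^'d) \<Rightarrow> 'n list \<Rightarrow> real^'d^'d" where
  "path_sig \<sigma> (x # y # p) = \<sigma> x y ** path_sig \<sigma> (y # p)"
| "path_sig \<sigma> _ = mat 1"

definition hit_paths :: "'n \<Rightarrow> 'n \<Rightarrow> 'n list set" where
  "hit_paths i j = {p. p \<noteq> [] \<and> hd p = i \<and> last p = j \<and> j \<notin> set (butlast p)}"

text \<open>Omega^0_{ij}: the expectation of the product of signatures along the random walk
  started at i and stopped at the hitting time of j, written as the sum over the
  (countably many) possible trajectories up to the hitting time.\<close>
definition Omega0 :: "('n::finite \<Rightarrow> 'n \<Rightarrow> real) \<Rightarrow> ('n \<Rightarrow> 'n \<Rightarrow> real^'d::finite^'d) \<Rightarrow> 'n \<Rightarrow> 'n \<Rightarrow> real^'d^'d" where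
  "Omega0 w \<sigma> i j = infsum (\<lambda>p. path_prob w p *\<^sub>R path_sig \<sigma> p) (hit_paths i j)"

definition Nmat :: "('n::finite \<Rightarrow> 'n \<Rightarrow> real) \<Rightarrow> ('n \<Rightarrow> 'n \<Rightarrow> real^'d::finite^'d) \<Rightarrow> 'n \<Rightarrow> 'n \<Rightarrow> real^'d^('n \<times> 'd)" where
  "Nmat w \<sigma> i j = (\<chi> r b.
      if fst r = i then (if snd r = b then 1 else 0)
      else if fst r = j then - (transpose (Omega0 w \<sigma> i j) $ snd r $ b) else 0)"

definition Wmat :: "('n::finite \<Rightarrow> 'n \<Rightarrow> real) \<Rightarrow> ('n \<Rightarrow> 'n \<Rightarrow> real^'d::finite^'d) \<Rightarrow> 'n \<Rightarrow> 'n \<Rightarrow> real^'d^('n \<times> 'd)" where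
  "Wmat w \<sigma> i j = pinv (conn_lap w \<sigma>) ** Nmat w \<sigma> i j"

definition conn_eff_res :: "('n::finite \<Rightarrow> 'n \<Rightarrow> real) \<Rightarrow> ('n \<Rightarrow> 'n \<Rightarrow> real^'d::finite^'d) \<Rightarrow> 'n \<Rightarrow> 'n \<Rightarrow> real" where
  "conn_eff_res w \<sigma> i j = 1 / (2 * real CARD('d)) *
     mtrace (transpose (Wmat w \<sigma> i j) ** conn_lap w \<sigma> ** Wmat w \<sigma> i j
           + transpose (Wmat w \<sigma> j i) ** conn_lap w \<sigma> ** Wmat w \<sigma> j i)"

end

theory Submission
  imports Defs
begin


lemma matrix_add_rdistrib: "((B + C) ** A) = (B ** A) + (C ** A)"
  by (vector matrix_matrix_mult_def sum.distrib[symmetric] field_simps)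
lemma matrix_diff_ldistrib: "(A ** (B - C)) = (A ** B) - (A ** (C::'a::ring_1^_^_))"
  by (vector matrix_matrix_mult_def sum_subtractf[symmetric] field_simps)
lemma matrix_diff_rdistrib: "((B - C) ** A) = (B ** A) - (C ** (A::'a::ring_1^_^_))"
  by (vector matrix_matrix_mult_def sum_subtractf[symmetric] field_simps)
lemma transpose_add: "transpose (A + B) = transpose A + transpose B"
  by (vector transpose_def)
lemma transpose_diff: "transpose (A - B) = transpose A - transpose (B::'a::ab_group_add^_^_)"
  by (vector transpose_def)

definition penrose :: "real^'n::finite^'m::finite \<Rightarrow> real^'m^'n \<Rightarrow> bool" where
  "penrose A X \<longleftrightarrow> A ** X ** A = A \<and> X ** A ** X = X \<and>
                    transpose (A ** X) = A ** X \<and> transpose (X ** A) = X ** A"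

lemma penrose_unique:
  assumes X: "penrose A X" and Y: "penrose A Y"
  shows "X = Y"
proof -
  have x1: "A ** X ** A = A" and x2: "X ** A ** X = X" and x3: "transpose (A ** X) = A ** X"
    and x4: "transpose (X ** A) = X ** A" using X by (auto simp: penrose_def)
  have y1: "A ** Y ** A = A" and y2: "Y ** A ** Y = Y" and y3: "transpose (A ** Y) = A ** Y"
    and y4: "transpose (Y ** A) = Y ** A" using Y by (auto simp: penrose_def)
  have "transpose A = transpose (A ** Y ** A)" using y1 by simp
  also have "\<dots> = transpose A ** transpose Y ** transpose A" by (simp add: matrix_transpose_mul matrix_mul_assoc)
  finally have tA: "transpose A = transpose A ** transpose Y ** transpose A" .
  have "transpose A = transpose (A ** X ** A)" using x1 by simp
  also have "\<dots> = transpose A ** transpose X ** transpose A" by (simp add: matrix_transpose_mul matrix_mul_assoc)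
  finally have tA2: "transpose A = transpose A ** transpose X ** transpose A" .
  have "X = X ** (A ** X)" using x2 by (simp add: matrix_mul_assoc)
  also have "\<dots> = X ** transpose (A ** X)" using x3 by simp
  also have "\<dots> = X ** transpose X ** transpose A" by (simp add: matrix_transpose_mul matrix_mul_assoc)
  also have "\<dots> = X ** transpose X ** (transpose A ** transpose Y ** transpose A)" using tA by simp
  also have "\<dots> = X ** transpose (A ** X) ** transpose (A ** Y)"
    by (simp add: matrix_transpose_mul matrix_mul_assoc)
  also have "\<dots> = X ** A ** X ** A ** Y" using x3 y3 by (simp add: matrix_mul_assoc)
  also have "\<dots> = X ** A ** Y" using x2 by simp
  finally have eX: "X = X ** A ** Y" .
  have "Y = (Y ** A) ** Y" using y2 by simp
  also have "\<dots> = transpose (Y ** A) ** Y" using y4 by simp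
  also have "\<dots> = transpose A ** transpose Y ** Y" by (simp add: matrix_transpose_mul)
  also have "\<dots> = (transpose A ** transpose X ** transpose A) ** transpose Y ** Y"
    using tA2 by simp
  also have "\<dots> = transpose (X ** A) ** transpose (Y ** A) ** Y"
    by (simp add: matrix_transpose_mul matrix_mul_assoc)
  also have "\<dots> = X ** A ** Y ** A ** Y" using x4 y4 by (simp add: matrix_mul_assoc)
  also have "\<dots> = X ** A ** (Y ** A ** Y)" by (simp add: matrix_mul_assoc)
  also have "\<dots> = X ** A ** Y" using y2 by simp
  finally show ?thesis using eX by simp
qed

lemma pinv_eq: assumes "penrose A X" shows "pinv A = X"
proof -
  have "(THE X. penrose A X) = X"
    by (rule the_equality) (use assms penrose_unique in blast)+
  moreover have "pinv A = (THE X. penrose A X)" unfolding pinv_def penrose_def by (rule refl)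
  ultimately show ?thesis by simp
qed

definition outer :: "real^'n \<Rightarrow> real^'n^'n" where
  "outer b = (\<chi> i j. b$i * b$j)"

lemma outer_mv: "outer b *v v = (b \<bullet> v) *\<^sub>R b"
  by (vector outer_def matrix_vector_mult_def inner_vec_def sum_distrib_left mult_ac)

lemma sum_mv: "finite B \<Longrightarrow> (\<Sum>b\<in>B. f b) *v v = (\<Sum>b\<in>B. f b *v v)"
  by (induction B rule: finite_induct) (auto simp: matrix_vector_mult_add_rdistrib)

lemma mv_sum: "finite B \<Longrightarrow> A *v (\<Sum>b\<in>B. f b) = (\<Sum>b\<in>B. A *v f b)"
  by (induction B rule: finite_induct) (auto simp: matrix_vector_right_distrib)

lemma pinv_sym_exists:
  fixes A :: "real^'n::finite^'n"
  assumes sym: "transpose A = A"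
  shows "\<exists>X. penrose A X"
proof -
  let ?K = "{v. A *v v = 0}"
  have sub: "subspace ?K"
    by (auto simp: subspace_def matrix_vector_right_distrib matrix_vector_mult_scaleR)
  obtain B where BK: "B \<subseteq> ?K" and orth: "pairwise orthogonal B" and nB: "\<And>x. x \<in> B \<Longrightarrow> norm x = 1"
    and indB: "independent B" and spB: "span B = ?K"
    using orthonormal_basis_subspace[OF sub] by metis
  have finB: "finite B" using indB independent_imp_finite by blast
  define P where "P = (\<Sum>b\<in>B. outer b)"
  have Pv: "P *v v = (\<Sum>b\<in>B. (b \<bullet> v) *\<^sub>R b)" for v
    unfolding P_def by (simp add: sum_mv[OF finB] outer_mv)
  have bb: "b \<bullet> c = (if b = c then 1 else 0)" if "b \<in> B" "c \<in> B" for b c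
    using orth nB that by (auto simp: pairwise_def orthogonal_def dot_square_norm)
  have exp: "(\<Sum>b\<in>B. (b \<bullet> v) *\<^sub>R b) = v" if "v \<in> ?K" for v
  proof -
    from that spB have "v \<in> span B" by simp
    then obtain u where u: "v = (\<Sum>c\<in>B. u c *\<^sub>R c)"
      using span_finite[OF finB] by auto
    have "b \<bullet> v = u b" if "b \<in> B" for b
    proof -
      have "b \<bullet> v = (\<Sum>c\<in>B. u c * (b \<bullet> c))" by (simp add: u inner_sum_right)
      also have "\<dots> = (\<Sum>c\<in>B. if c = b then u c else 0)"
        by (rule sum.cong) (auto simp: bb that)
      finally show ?thesis using finB that by simp
    qed
    then show ?thesis by (simp add: u)
  qed
  have PK: "A *v (P *v v) = 0" for v
    unfolding Pv using BK by (simp add: mv_sum[OF finB] matrix_vector_mult_scaleR subset_iff)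
  have PvK: "v \<in> ?K \<Longrightarrow> P *v v = v" for v using exp Pv by simp
  have AP: "A ** P = 0"
    by (subst matrix_eq) (use PK in \<open>simp add: matrix_vector_mul_assoc[symmetric]\<close>)
  have PP: "P ** P = P"
    by (subst matrix_eq) (use PK PvK in \<open>simp add: matrix_vector_mul_assoc[symmetric]\<close>)
  have Psym: "transpose P = P"
    unfolding P_def by (vector transpose_def outer_def sum_component mult.commute)
  have PA: "P ** A = 0"
    by (metis AP Psym sym matrix_transpose_mul transpose_transpose transpose_mat mat_0)
  define M where "M = A + P"
  have injM: "inj ((*v) M)"
  proof (rule linear_injective_0[THEN iffD2])
    show "linear ((*v) M)" by simp
    show "\<forall>x. M *v x = 0 \<longrightarrow> x = 0"
    proof (intro allI impI)
      fix x assume "M *v x = 0"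
      then have e: "A *v x = - (P *v x)" by (simp add: M_def matrix_vector_mult_add_rdistrib eq_neg_iff_add_eq_0)
      have "(A *v x) \<bullet> (A *v x) = - ((A *v x) \<bullet> (P *v x))" by (simp add: e)
      also have "(A *v x) \<bullet> (P *v x) = x \<bullet> (A *v (P *v x))"
        by (metis dot_lmul_matrix sym vector_transpose_matrix inner_commute)
      also have "\<dots> = 0" using PK by simp
      finally have "A *v x = 0" by simp
      then have "P *v x = x" using PvK by simp
      then show "x = 0" using e \<open>A *v x = 0\<close> by simp
    qed
  qed
  obtain N where NM: "N ** M = mat 1"
    using matrix_left_invertible_injective[of M] injM by auto
  then have MN: "M ** N = mat 1" using matrix_left_right_inverse by blast
  have MP: "M ** P = P" unfolding M_def matrix_add_rdistrib AP PP by simp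
  have PM: "P ** M = P" unfolding M_def matrix_add_ldistrib PA PP by simp
  have NP: "N ** P = P" by (metis MP NM matrix_mul_assoc matrix_mul_lid)
  have PN: "P ** N = P" by (metis PM MN matrix_mul_assoc matrix_mul_rid)
  have AM: "A = M - P" by (simp add: M_def)
  define X where "X = N - P"
  have "A ** X = (M - P) ** (N - P)" using AM X_def by simp
  also have "\<dots> = mat 1 - P" by (simp add: matrix_diff_ldistrib matrix_diff_rdistrib MN MP PN PP)
  finally have AX: "A ** X = mat 1 - P" .
  have "X ** A = (N - P) ** (M - P)" using AM X_def by simp
  also have "\<dots> = mat 1 - P" by (simp add: matrix_diff_ldistrib matrix_diff_rdistrib NM NP PM PP)
  finally have XA: "X ** A = mat 1 - P" .
  have "penrose A X"
    unfolding penrose_def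
  proof (intro conjI)
    show "A ** X ** A = A" by (simp add: AX matrix_diff_rdistrib PA)
    have PX: "P ** X = 0" by (simp add: X_def matrix_diff_ldistrib PN PP)
    show "X ** A ** X = X" unfolding XA matrix_diff_rdistrib PX by simp
    show "transpose (A ** X) = A ** X" by (simp add: AX transpose_diff Psym)
    show "transpose (X ** A) = X ** A" by (simp add: XA transpose_diff Psym)
  qed
  then show ?thesis ..
qed

lemma pinv_sym:
  fixes A :: "real^'n::finite^'n"
  assumes sym: "transpose A = A"
  shows "penrose A (pinv A)" and "transpose (pinv A) = pinv A"
proof -
  obtain X where X: "penrose A X" using pinv_sym_exists[OF sym] by blast
  then show p: "penrose A (pinv A)" using pinv_eq by metis
  have "penrose A (transpose (pinv A))"
    using p sym unfolding penrose_def
    by (metis matrix_transpose_mul transpose_transpose matrix_mul_assoc)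
  then show "transpose (pinv A) = pinv A" using penrose_unique p by blast
qed



lemma hit_jj: "hit_paths j j = {[j]}"
proof -
  have "p = [j]" if "p \<in> hit_paths j j" for p
  proof -
    from that have p: "p \<noteq> []" "hd p = j" "last p = j" "j \<notin> set (butlast p)"
      by (auto simp: hit_paths_def)
    obtain a q where pq: "p = a # q" using p(1) by (cases p) auto
    have "q = []"
    proof (rule ccontr)
      assume "q \<noteq> []"
      then have "a \<in> set (butlast p)" by (simp add: pq)
      then show False using p pq \<open>q \<noteq> []\<close> by simp
    qed
    then show ?thesis using pq p by simp
  qed
  then show ?thesis by (auto simp: hit_paths_def)
qed

lemma hit_Cons:
  assumes "x \<noteq> j"
  shows "hit_paths x j = (\<Union>y\<in>UNIV. (\<lambda>q. x # q) ` hit_paths y j)"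
proof (intro equalityI subsetI)
  fix p assume "p \<in> hit_paths x j"
  then have p: "p \<noteq> []" "hd p = x" "last p = j" "j \<notin> set (butlast p)"
    by (auto simp: hit_paths_def)
  obtain q where pq: "p = x # q" using p(1,2) by (cases p) auto
  have "q \<noteq> []" using pq p assms by auto
  then have "q \<in> hit_paths (hd q) j" using p pq by (auto simp: hit_paths_def)
  then show "p \<in> (\<Union>y\<in>UNIV. (\<lambda>q. x # q) ` hit_paths y j)" using pq by blast
next
  fix p assume "p \<in> (\<Union>y\<in>UNIV. (\<lambda>q. x # q) ` hit_paths y j)"
  then obtain y q where q: "q \<in> hit_paths y j" and pq: "p = x # q" by blast
  then show "p \<in> hit_paths x j" using assms by (auto simp: hit_paths_def)
qed

lemma hit_hd: "q \<in> hit_paths y j \<Longrightarrow> q \<noteq> [] \<and> hd q = y"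
  by (auto simp: hit_paths_def)

lemma hit_disj: "y \<noteq> y' \<Longrightarrow> ((\<lambda>q. x # q) ` hit_paths y j) \<inter> ((\<lambda>q. x # q) ` hit_paths y' j) = {}"
  by (auto dest: hit_hd)

lemma path_prob_Cons: "q \<noteq> [] \<Longrightarrow> path_prob w (x # q) = w x (hd q) / gdeg w x * path_prob w q"
  by (cases q) auto

lemma path_sig_Cons: "q \<noteq> [] \<Longrightarrow> path_sig \<sigma> (x # q) = \<sigma> x (hd q) ** path_sig \<sigma> q"
  by (cases q) auto

lemma gdeg_nonneg: "(\<And>x y. w x y \<ge> 0) \<Longrightarrow> gdeg w x \<ge> 0"
  by (simp add: gdeg_def sum_nonneg)

lemma path_prob_nonneg: "(\<And>x y. w x y \<ge> 0) \<Longrightarrow> path_prob w p \<ge> 0"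
  by (induction w p rule: path_prob.induct) (auto intro!: mult_nonneg_nonneg divide_nonneg_nonneg gdeg_nonneg)

lemma finite_hitT: "finite (hit_paths (x::'n::finite) j \<inter> {p. length p \<le> T})"
  by (rule finite_subset[OF _ finite_lists_length_le[of "UNIV::'n set" T]]) auto

lemma hit_sum_le1:
  fixes w :: "'n::finite \<Rightarrow> 'n \<Rightarrow> real"
  assumes wnn: "\<And>x y. w x y \<ge> 0"
  shows "sum (path_prob w) (hit_paths x j \<inter> {p. length p \<le> T}) \<le> 1"
proof (induction T arbitrary: x)
  case 0
  have "hit_paths x j \<inter> {p. length p \<le> 0} = {}" by (auto simp: hit_paths_def)
  then show ?case by simp
next
  case (Suc T)
  show ?case
  proof (cases "x = j")
    case True
    have "sum (path_prob w) (hit_paths x j \<inter> {p. length p \<le> Suc T}) \<le> sum (path_prob w) {[j]}"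
      by (rule sum_mono2) (auto simp: True hit_jj path_prob_nonneg wnn)
    then show ?thesis by simp
  next
    case False
    let ?H = "\<lambda>y. hit_paths y j \<inter> {p. length p \<le> T}"
    have eq: "hit_paths x j \<inter> {p. length p \<le> Suc T} = (\<Union>y\<in>UNIV. (\<lambda>q. x # q) ` ?H y)"
      using hit_Cons[OF False] by auto
    have "sum (path_prob w) (hit_paths x j \<inter> {p. length p \<le> Suc T})
        = (\<Sum>y\<in>UNIV. sum (path_prob w) ((\<lambda>q. x # q) ` ?H y))"
      unfolding eq
      by (rule sum.UNION_disjoint) (use finite_hitT in \<open>auto dest: hit_hd\<close>)
    also have "\<dots> = (\<Sum>y\<in>UNIV. w x y / gdeg w x * sum (path_prob w) (?H y))"
    proof (rule sum.cong[OF refl])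
      fix y
      have "sum (path_prob w) ((\<lambda>q. x # q) ` ?H y) = sum (\<lambda>q. path_prob w (x # q)) (?H y)"
        by (subst sum.reindex) (auto simp: inj_on_def)
      also have "\<dots> = sum (\<lambda>q. w x y / gdeg w x * path_prob w q) (?H y)"
        by (rule sum.cong[OF refl]) (auto simp: path_prob_Cons dest: hit_hd)
      finally show "sum (path_prob w) ((\<lambda>q. x # q) ` ?H y) = w x y / gdeg w x * sum (path_prob w) (?H y)"
        by (simp add: sum_distrib_left)
    qed
    also have "\<dots> \<le> (\<Sum>y\<in>UNIV. w x y / gdeg w x * 1)"
      by (rule sum_mono, rule mult_left_mono) (auto intro!: Suc divide_nonneg_nonneg gdeg_nonneg wnn)
    also have "\<dots> = gdeg w x / gdeg w x" by (simp add: gdeg_def sum_divide_distrib[symmetric])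
    also have "\<dots> \<le> 1" by simp
    finally show ?thesis .
  qed
qed

lemma prob_summable:
  fixes w :: "'n::finite \<Rightarrow> 'n \<Rightarrow> real"
  assumes wnn: "\<And>x y. w x y \<ge> 0"
  shows "path_prob w summable_on hit_paths x j"
proof (rule nonneg_bdd_above_summable_on)
  show "\<And>p. p \<in> hit_paths x j \<Longrightarrow> 0 \<le> path_prob w p" using path_prob_nonneg wnn by blast
  show "bdd_above (sum (path_prob w) ` {F. F \<subseteq> hit_paths x j \<and> finite F})"
  proof (rule bdd_aboveI)
    fix s assume "s \<in> sum (path_prob w) ` {F. F \<subseteq> hit_paths x j \<and> finite F}"
    then obtain F where F: "F \<subseteq> hit_paths x j" "finite F" and s: "s = sum (path_prob w) F" by auto
    define T where "T = Max (length ` F)"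
    have "F \<subseteq> hit_paths x j \<inter> {p. length p \<le> T}" using F by (auto simp: T_def)
    then have "s \<le> sum (path_prob w) (hit_paths x j \<inter> {p. length p \<le> T})"
      unfolding s by (rule sum_mono2[OF finite_hitT]) (auto simp: path_prob_nonneg wnn)
    also have "\<dots> \<le> 1" by (rule hit_sum_le1[OF wnn])
    finally show "s \<le> 1" .
  qed
qed



lemma sig_orth:
  assumes orth: "\<And>x y. w x y > 0 \<Longrightarrow> orthogonal_matrix (\<sigma> x y)"
    and wnn: "\<And>x y. w x y \<ge> 0"
  shows "path_prob w p \<noteq> 0 \<Longrightarrow> orthogonal_matrix (path_sig \<sigma> p)"
proof (induction p rule: induct_list012)
  case 1 then show ?case by (simp add: orthogonal_matrix_id)
next
  case (2 x) then show ?case by (simp add: orthogonal_matrix_id)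
next
  case (3 x y zs)
  then have "w x y \<noteq> 0" "path_prob w (y # zs) \<noteq> 0" by auto
  then have "w x y > 0" using wnn[of x y] by simp
  then show ?case using 3 orth orthogonal_matrix_mul by auto
qed

lemma norm_orth:
  fixes M :: "real^'d::finite^'d"
  assumes "orthogonal_matrix M"
  shows "norm M = sqrt (real CARD('d))"
proof -
  have "norm (M$i) = 1" for i
  proof -
    have "(M ** transpose M) $ i $ i = 1" using assms by (simp add: orthogonal_matrix_def mat_def)
    then have "M$i \<bullet> M$i = 1"
      by (simp add: matrix_mult_transpose_dot_row row_def)
    then have "norm (M$i) ^ 2 = 1 ^ 2" by (simp add: dot_square_norm)
    then show ?thesis by (subst (asm) power2_eq_iff_nonneg) auto
  qed
  then show ?thesis by (simp add: norm_vec_def L2_set_def)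
qed

locale cg =
  fixes w :: "'n::finite \<Rightarrow> 'n \<Rightarrow> real" and \<sigma> :: "'n \<Rightarrow> 'n \<Rightarrow> real^'d::finite^'d"
  assumes wnn: "\<And>x y. w x y \<ge> 0"
    and orth: "\<And>x y. w x y > 0 \<Longrightarrow> orthogonal_matrix (\<sigma> x y)"
begin

definition fp :: "'n list \<Rightarrow> real^'d^'d" where
  "fp p = path_prob w p *\<^sub>R path_sig \<sigma> p"

lemma fp_summable: "fp summable_on hit_paths x j"
proof -
  let ?K = "sqrt (real CARD('d))"
  have "(\<lambda>p. ?K * path_prob w p) summable_on hit_paths x j"
    using prob_summable[OF wnn] by (rule summable_on_cmult_right)
  then have ab: "(\<lambda>p. norm (?K * path_prob w p)) summable_on hit_paths x j"
    by (rule summable_on_cong[THEN iffD1, rotated]) (simp add: path_prob_nonneg wnn)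
  have "(\<lambda>p. norm (fp p)) summable_on hit_paths x j"
  proof (rule Infinite_Sum.abs_summable_on_comparison_test[OF ab])
    fix p
    show "norm (fp p) \<le> norm (?K * path_prob w p)"
    proof (cases "path_prob w p = 0")
      case True then show ?thesis by (simp add: fp_def)
    next
      case False
      have "orthogonal_matrix (path_sig \<sigma> p)"
        by (rule sig_orth[of w \<sigma> p]) (use orth wnn False in auto)
      then have "norm (path_sig \<sigma> p) = ?K" by (rule norm_orth)
      then show ?thesis by (simp add: fp_def path_prob_nonneg wnn abs_mult)
    qed
  qed
  then show ?thesis by (rule abs_summable_summable)
qed

lemma Omega_jj: "Omega0 w \<sigma> j j = mat 1"
  by (simp add: Omega0_def hit_jj)

lemma bl_mult: "bounded_linear (\<lambda>M::real^'d^'d. A ** M)"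
  unfolding linear_conv_bounded_linear[symmetric]
  by (rule linearI) (simp_all add: matrix_add_ldistrib matrix_scalar_ac scalar_matrix_assoc)

lemma Omega_harm:
  assumes "x \<noteq> j"
  shows "Omega0 w \<sigma> x j = (\<Sum>y\<in>UNIV. (w x y / gdeg w x) *\<^sub>R (\<sigma> x y ** Omega0 w \<sigma> y j))"
proof -
  have fpe: "fp = (\<lambda>p. path_prob w p *\<^sub>R path_sig \<sigma> p)" by (rule ext) (simp add: fp_def)
  have O: "Omega0 w \<sigma> a b = infsum fp (hit_paths a b)" for a b by (simp add: Omega0_def fpe)
  have "infsum fp (hit_paths x j) = infsum fp (\<Union>y\<in>UNIV. (\<lambda>q. x # q) ` hit_paths y j)"
    by (simp add: hit_Cons[OF assms])
  also have "\<dots> = (\<Sum>y\<in>UNIV. infsum fp ((\<lambda>q. x # q) ` hit_paths y j))"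
  proof (rule sum_infsum[symmetric])
    show "finite (UNIV::'n set)" by simp
    fix y show "fp summable_on (\<lambda>q. x # q) ` hit_paths y j"
      by (rule summable_on_subset_banach[OF fp_summable[of x j]]) (use hit_Cons[OF assms] in blast)
  next
    fix a a' :: 'n assume "a \<noteq> a'"
    then show "(\<lambda>q. x # q) ` hit_paths a j \<inter> (\<lambda>q. x # q) ` hit_paths a' j = {}"
      by (auto dest: hit_hd)
  qed
  also have "\<dots> = (\<Sum>y\<in>UNIV. (w x y / gdeg w x) *\<^sub>R (\<sigma> x y ** infsum fp (hit_paths y j)))"
  proof (rule sum.cong[OF refl])
    fix y
    have "infsum fp ((\<lambda>q. x # q) ` hit_paths y j) = infsum (fp \<circ> (\<lambda>q. x # q)) (hit_paths y j)"
      by (rule infsum_reindex) (simp add: inj_on_def)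
    also have "\<dots> = infsum (\<lambda>q. (w x y / gdeg w x) *\<^sub>R (\<sigma> x y ** fp q)) (hit_paths y j)"
      by (rule infsum_cong) (auto simp: fp_def path_prob_Cons path_sig_Cons matrix_scalar_ac scalar_matrix_assoc[symmetric] dest!: hit_hd)
    also have "\<dots> = (w x y / gdeg w x) *\<^sub>R infsum (\<lambda>q. \<sigma> x y ** fp q) (hit_paths y j)"
      by (rule infsum_scaleR_right)
    also have "infsum (\<lambda>q. \<sigma> x y ** fp q) (hit_paths y j) = \<sigma> x y ** infsum fp (hit_paths y j)"
      by (rule infsumI, rule has_sum_bounded_linear[OF bl_mult]) (use fp_summable in auto)
    finally show "infsum fp ((\<lambda>q. x # q) ` hit_paths y j) = (w x y / gdeg w x) *\<^sub>R (\<sigma> x y ** infsum fp (hit_paths y j))" .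
  qed
  finally show ?thesis by (simp add: O)
qed

end


lemma sum_UNIV_prod: "(\<Sum>r\<in>(UNIV::('a::finite \<times> 'b::finite) set). g r) = (\<Sum>x\<in>UNIV. \<Sum>a\<in>UNIV. g (x,a))"
  by (simp add: UNIV_Times_UNIV[symmetric] sum.cartesian_product del: UNIV_Times_UNIV)

definition blk :: "real^('n::finite \<times> 'd::finite) \<Rightarrow> 'n \<Rightarrow> real^'d" where
  "blk Y x = (\<chi> a. Y $ (x,a))"

lemma blk_nth[simp]: "blk Y x $ a = Y $ (x,a)" by (simp add: blk_def)

lemma inner_prod_blk: "(Y::real^('n::finite \<times> 'd::finite)) \<bullet> Z = (\<Sum>x\<in>UNIV. blk Y x \<bullet> blk Z x)"
  by (simp add: inner_vec_def sum_UNIV_prod)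

lemma orth_norm:
  fixes S :: "real^'d::finite^'d"
  assumes "orthogonal_matrix S"
  shows "(S *v v) \<bullet> (S *v v) = v \<bullet> v"
proof -
  have "(S *v v) \<bullet> (S *v v) = ((S *v v) v* S) \<bullet> v" by (rule dot_lmul_matrix[symmetric])
  also have "(S *v v) v* S = transpose S *v (S *v v)" by simp
  also have "\<dots> = (transpose S ** S) *v v" by (simp only: matrix_vector_mul_assoc)
  also have "\<dots> = v" using assms by (simp add: orthogonal_matrix_def)
  finally show ?thesis .
qed

lemma CL_apply:
  "(conn_lap w \<sigma> *v Y) $ (x,a) = gdeg w x * Y $ (x,a) - (\<Sum>z\<in>UNIV. w x z * (\<sigma> x z *v blk Y z) $ a)"
proof -
  have "(conn_lap w \<sigma> *v Y) $ (x,a) = (\<Sum>r\<in>UNIV. ((if (x,a) = r then gdeg w x else 0)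
      - w x (fst r) * (\<sigma> x (fst r) $ a $ snd r)) * Y $ r)"
    unfolding matrix_vector_mult_def conn_lap_def by (auto intro!: sum.cong)
  also have "\<dots> = (\<Sum>r\<in>UNIV. (if (x,a) = r then gdeg w x * Y $ r else 0))
      - (\<Sum>r\<in>UNIV. w x (fst r) * (\<sigma> x (fst r) $ a $ snd r) * Y $ r)"
    by (subst sum_subtractf[symmetric]) (rule sum.cong, auto simp: left_diff_distrib)
  also have "(\<Sum>r\<in>UNIV. (if (x,a) = r then gdeg w x * Y $ r else 0)) = gdeg w x * Y $ (x,a)"
    by simp
  also have "(\<Sum>r\<in>UNIV. w x (fst r) * (\<sigma> x (fst r) $ a $ snd r) * Y $ r)
      = (\<Sum>z\<in>UNIV. w x z * (\<sigma> x z *v blk Y z) $ a)"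
    by (simp add: sum_UNIV_prod matrix_vector_mult_def sum_distrib_left mult.assoc)
  finally show ?thesis .
qed

lemma lap_apply: "(lap w *v f) $ x = gdeg w x * f $ x - (\<Sum>z\<in>UNIV. w x z * f $ z)"
proof -
  have "(lap w *v f) $ x = (\<Sum>z\<in>UNIV. (if x = z then gdeg w x * f $ z else 0) - w x z * f $ z)"
    unfolding matrix_vector_mult_def lap_def by (auto simp: left_diff_distrib intro!: sum.cong)
  then show ?thesis by (simp add: sum_subtractf)
qed



locale cgf = cg w \<sigma> for w :: "'n::finite \<Rightarrow> 'n \<Rightarrow> real" and \<sigma> :: "'n \<Rightarrow> 'n \<Rightarrow> real^'d::finite^'d" +
  assumes wsym: "\<And>x y. w x y = w y x"
    and conn: "\<And>x y. ((\<lambda>a b. w a b > 0)\<^sup>*\<^sup>*) x y"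
    and sigT: "\<And>x y. w x y > 0 \<Longrightarrow> \<sigma> y x = transpose (\<sigma> x y)"
begin

abbreviation "C \<equiv> conn_lap w \<sigma>"
abbreviation "L \<equiv> lap w"

lemma deg_def': "gdeg w x = (\<Sum>z\<in>UNIV. w x z)" by (simp add: gdeg_def)

lemma swap_sym: "(\<Sum>x\<in>UNIV. \<Sum>z\<in>UNIV. w x z * g z) = (\<Sum>z\<in>UNIV. gdeg w z * g z)"
proof -
  have "(\<Sum>x\<in>UNIV. \<Sum>z\<in>UNIV. w x z * g z) = (\<Sum>z\<in>UNIV. \<Sum>x\<in>UNIV. w z x * g z)"
    by (subst sum.swap) (simp add: wsym)
  also have "\<dots> = (\<Sum>z\<in>UNIV. gdeg w z * g z)" by (simp add: gdeg_def sum_distrib_right)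
  finally show ?thesis .
qed

lemma quad_C:
  "Y \<bullet> (C *v Y) = (1/2) * (\<Sum>x\<in>UNIV. \<Sum>z\<in>UNIV. w x z * (norm (blk Y x - \<sigma> x z *v blk Y z))\<^sup>2)"
proof -
  define u where "u = blk Y"
  have "Y \<bullet> (C *v Y) = (\<Sum>x\<in>UNIV. \<Sum>a\<in>UNIV. Y$(x,a) * (gdeg w x * Y$(x,a) - (\<Sum>z\<in>UNIV. w x z * (\<sigma> x z *v u z)$a)))"
    by (simp add: inner_vec_def sum_UNIV_prod CL_apply u_def)
  also have "\<dots> = (\<Sum>x\<in>UNIV. gdeg w x * (u x \<bullet> u x) - (\<Sum>z\<in>UNIV. w x z * (u x \<bullet> (\<sigma> x z *v u z))))"
  proof (rule sum.cong[OF refl])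
    fix x
    have "(\<Sum>a\<in>UNIV. Y$(x,a) * (\<Sum>z\<in>UNIV. w x z * (\<sigma> x z *v u z)$a))
        = (\<Sum>z\<in>UNIV. w x z * (u x \<bullet> (\<sigma> x z *v u z)))"
      by (simp add: inner_vec_def sum_distrib_left u_def mult_ac) (rule sum.swap)
    then show "(\<Sum>a\<in>UNIV. Y$(x,a) * (gdeg w x * Y$(x,a) - (\<Sum>z\<in>UNIV. w x z * (\<sigma> x z *v u z)$a)))
        = gdeg w x * (u x \<bullet> u x) - (\<Sum>z\<in>UNIV. w x z * (u x \<bullet> (\<sigma> x z *v u z)))"
      by (simp add: right_diff_distrib sum_subtractf inner_vec_def sum_distrib_left u_def mult_ac)
  qed
  also have "\<dots> = (1/2) * (\<Sum>x\<in>UNIV. \<Sum>z\<in>UNIV. w x z * (norm (u x - \<sigma> x z *v u z))\<^sup>2)"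
  proof -
    have tm: "w x z * (norm (u x - \<sigma> x z *v u z))\<^sup>2
        = w x z * (u x \<bullet> u x) + w x z * (u z \<bullet> u z) - 2 * (w x z * (u x \<bullet> (\<sigma> x z *v u z)))" for x z
    proof (cases "w x z > 0")
      case True
      have "(\<sigma> x z *v u z) \<bullet> (\<sigma> x z *v u z) = u z \<bullet> u z" using orth[OF True] by (rule orth_norm)
      then show ?thesis
        by (simp add: power2_norm_eq_inner inner_diff_left inner_diff_right inner_commute algebra_simps)
    next
      case False
      then have "w x z = 0" using wnn[of x z] by simp
      then show ?thesis by simp
    qed
    have "(\<Sum>x\<in>UNIV. \<Sum>z\<in>UNIV. w x z * (norm (u x - \<sigma> x z *v u z))\<^sup>2)
       = (\<Sum>x\<in>UNIV. \<Sum>z\<in>UNIV. w x z * (u x \<bullet> u x)) + (\<Sum>x\<in>UNIV. \<Sum>z\<in>UNIV. w x z * (u z \<bullet> u z))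
         - 2 * (\<Sum>x\<in>UNIV. \<Sum>z\<in>UNIV. w x z * (u x \<bullet> (\<sigma> x z *v u z)))"
      by (simp add: tm sum.distrib sum_subtractf sum_distrib_left)
    also have "(\<Sum>x\<in>UNIV. \<Sum>z\<in>UNIV. w x z * (u z \<bullet> u z)) = (\<Sum>x\<in>UNIV. gdeg w x * (u x \<bullet> u x))"
      by (rule swap_sym)
    also have "(\<Sum>x\<in>UNIV. \<Sum>z\<in>UNIV. w x z * (u x \<bullet> u x)) = (\<Sum>x\<in>UNIV. gdeg w x * (u x \<bullet> u x))"
      by (simp add: gdeg_def sum_distrib_right)
    finally have H: "(\<Sum>x\<in>UNIV. \<Sum>z\<in>UNIV. w x z * (norm (u x - \<sigma> x z *v u z))\<^sup>2)
       = (\<Sum>x\<in>UNIV. gdeg w x * (u x \<bullet> u x)) + (\<Sum>x\<in>UNIV. gdeg w x * (u x \<bullet> u x))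
         - 2 * (\<Sum>x\<in>UNIV. \<Sum>z\<in>UNIV. w x z * (u x \<bullet> (\<sigma> x z *v u z)))" .
    show ?thesis unfolding H sum_subtractf by (simp add: algebra_simps)
  qed
  finally show ?thesis by (simp add: u_def)
qed

lemma quad_L:
  "f \<bullet> (L *v f) = (1/2) * (\<Sum>x\<in>UNIV. \<Sum>z\<in>UNIV. w x z * (f$x - f$z)\<^sup>2)"
proof -
  have "f \<bullet> (L *v f) = (\<Sum>x\<in>UNIV. gdeg w x * (f$x * f$x) - (\<Sum>z\<in>UNIV. w x z * (f$x * f$z)))"
    by (simp add: inner_vec_def lap_apply right_diff_distrib sum_distrib_left mult_ac)
  also have "\<dots> = (1/2) * (\<Sum>x\<in>UNIV. \<Sum>z\<in>UNIV. w x z * (f$x - f$z)\<^sup>2)"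
  proof -
    have tm: "w x z * (f$x - f$z)\<^sup>2 = w x z * (f$x * f$x) + w x z * (f$z * f$z) - 2 * (w x z * (f$x * f$z))" for x z
      by (simp add: power2_eq_square algebra_simps)
    have "(\<Sum>x\<in>UNIV. \<Sum>z\<in>UNIV. w x z * (f$x - f$z)\<^sup>2)
       = (\<Sum>x\<in>UNIV. \<Sum>z\<in>UNIV. w x z * (f$x * f$x)) + (\<Sum>x\<in>UNIV. \<Sum>z\<in>UNIV. w x z * (f$z * f$z))
         - 2 * (\<Sum>x\<in>UNIV. \<Sum>z\<in>UNIV. w x z * (f$x * f$z))"
      by (simp add: tm sum.distrib sum_subtractf sum_distrib_left)
    also have "(\<Sum>x\<in>UNIV. \<Sum>z\<in>UNIV. w x z * (f$z * f$z)) = (\<Sum>x\<in>UNIV. gdeg w x * (f$x * f$x))"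
      by (rule swap_sym)
    also have "(\<Sum>x\<in>UNIV. \<Sum>z\<in>UNIV. w x z * (f$x * f$x)) = (\<Sum>x\<in>UNIV. gdeg w x * (f$x * f$x))"
      by (simp add: gdeg_def sum_distrib_right)
    finally have H: "(\<Sum>x\<in>UNIV. \<Sum>z\<in>UNIV. w x z * (f$x - f$z)\<^sup>2)
       = (\<Sum>x\<in>UNIV. gdeg w x * (f$x * f$x)) + (\<Sum>x\<in>UNIV. gdeg w x * (f$x * f$x))
         - 2 * (\<Sum>x\<in>UNIV. \<Sum>z\<in>UNIV. w x z * (f$x * f$z))" .
    show ?thesis unfolding H sum_subtractf by (simp add: algebra_simps)
  qed
  finally show ?thesis .
qed

end


lemma sum_mv2: "finite B \<Longrightarrow> (\<Sum>b\<in>B. f b) *v v = (\<Sum>b\<in>B. f b *v v)"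
  by (induction B rule: finite_induct) (auto simp: matrix_vector_mult_add_rdistrib)

context cgf begin

lemma C_sym: "transpose C = C"
proof -
  have "C $ c $ r = C $ r $ c" for r c
  proof (cases "w (fst r) (fst c) > 0")
    case True
    have s: "\<sigma> (fst c) (fst r) = transpose (\<sigma> (fst r) (fst c))" using sigT[OF True] .
    have ww: "w (fst c) (fst r) = w (fst r) (fst c)" using wsym .
    show ?thesis unfolding conn_lap_def by (auto simp: s ww transpose_def)
  next
    case False
    then have "w (fst r) (fst c) = 0" "w (fst c) (fst r) = 0" using wnn[of "fst r" "fst c"] wsym by auto
    then show ?thesis by (auto simp: conn_lap_def)
  qed
  then show ?thesis by (simp add: vec_eq_iff transpose_def)
qed

lemma L_sym: "transpose L = L"
proof -
  have "L $ y $ x = L $ x $ y" for x y unfolding lap_def using wsym[of x y] by auto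
  then show ?thesis by (simp add: vec_eq_iff transpose_def)
qed

lemma C_psd: "Y \<bullet> (C *v Y) \<ge> 0"
  unfolding quad_C by (intro mult_nonneg_nonneg sum_nonneg) (auto simp: wnn)

lemma L_psd: "f \<bullet> (L *v f) \<ge> 0"
  unfolding quad_L by (intro mult_nonneg_nonneg sum_nonneg) (auto simp: wnn)

lemma sym_inner: "transpose A = A \<Longrightarrow> P \<bullet> (A *v Z) = Z \<bullet> (A *v (P::real^'k::finite))"
  by (metis dot_lmul_matrix inner_commute transpose_matrix_vector)

definition Psi :: "'n \<Rightarrow> real^'d \<Rightarrow> real^('n \<times> 'd)" where
  "Psi j c = (\<chi> r. (Omega0 w \<sigma> (fst r) j *v c) $ snd r)"

lemma blk_Psi: "blk (Psi j c) x = Omega0 w \<sigma> x j *v c"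
  by (simp add: blk_def Psi_def vec_eq_iff)

lemma deg0: "gdeg w x = 0 \<Longrightarrow> w x z = 0"
  using sum_nonneg_eq_0_iff[of UNIV "w x"] wnn by (simp add: gdeg_def)

lemma C_Psi: "x \<noteq> j \<Longrightarrow> (C *v Psi j c) $ (x,a) = 0"
proof -
  assume xj: "x \<noteq> j"
  have "Omega0 w \<sigma> x j *v c = (\<Sum>z\<in>UNIV. (w x z / gdeg w x) *\<^sub>R (\<sigma> x z *v (Omega0 w \<sigma> z j *v c)))"
    by (subst Omega_harm[OF xj]) (simp add: sum_mv2 scaleR_matrix_vector_assoc[symmetric] matrix_vector_mul_assoc)
  then have e: "(Omega0 w \<sigma> x j *v c) $ a = (\<Sum>z\<in>UNIV. (w x z / gdeg w x) * (\<sigma> x z *v (Omega0 w \<sigma> z j *v c)) $ a)"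
    by (simp add: sum_component)
  show ?thesis
  proof (cases "gdeg w x = 0")
    case True
    then show ?thesis by (simp add: CL_apply deg0)
  next
    case False
    have "Psi j c $ (x,a) = (Omega0 w \<sigma> x j *v c) $ a" by (simp add: Psi_def)
    then show ?thesis using False by (simp add: CL_apply blk_Psi e sum_distrib_left)
  qed
qed

lemma blk_diff: "blk (Y - Z) x = blk Y x - blk Z x"
  by (simp add: blk_def vec_eq_iff)

lemma energy_shift:
  fixes Y :: "real^('n \<times> 'd)" and i j :: 'n
  defines "Z \<equiv> Y - Psi j (blk Y j)"
  shows "Z \<bullet> (C *v Z) \<le> Y \<bullet> (C *v Y)" and "blk Z j = 0"
    and "blk Z i = blk Y i - Omega0 w \<sigma> i j *v blk Y j"
proof -
  define P where "P = Psi j (blk Y j)"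
  show Zj: "blk Z j = 0" by (simp add: Z_def blk_diff blk_Psi Omega_jj)
  show "blk Z i = blk Y i - Omega0 w \<sigma> i j *v blk Y j" by (simp add: Z_def blk_diff blk_Psi)
  have Y: "Y = Z + P" by (simp add: Z_def P_def)
  have ZP: "Z \<bullet> (C *v P) = 0"
  proof -
    have "blk Z x \<bullet> blk (C *v P) x = 0" for x
    proof (cases "x = j")
      case True then show ?thesis using Zj by simp
    next
      case False
      then have "blk (C *v P) x = 0" by (simp add: vec_eq_iff P_def C_Psi)
      then show ?thesis by simp
    qed
    then show ?thesis by (simp add: inner_prod_blk)
  qed
  have PZ: "P \<bullet> (C *v Z) = 0" using ZP sym_inner[OF C_sym] by metis
  have "Y \<bullet> (C *v Y) = Z \<bullet> (C *v Z) + Z \<bullet> (C *v P) + P \<bullet> (C *v Z) + P \<bullet> (C *v P)"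
    unfolding Y by (simp add: matrix_vector_right_distrib inner_add_left inner_add_right)
  then show "Z \<bullet> (C *v Z) \<le> Y \<bullet> (C *v Y)" using ZP PZ C_psd[of P] by simp
qed

definition nrm :: "real^('n \<times> 'd) \<Rightarrow> real^'n" where
  "nrm Z = (\<chi> x. norm (blk Z x))"

lemma energy_nrm: "nrm Z \<bullet> (L *v nrm Z) \<le> Z \<bullet> (C *v Z)"
proof -
  have tm: "w x z * (nrm Z $ x - nrm Z $ z)\<^sup>2 \<le> w x z * (norm (blk Z x - \<sigma> x z *v blk Z z))\<^sup>2" for x z
  proof (cases "w x z > 0")
    case True
    have "norm (\<sigma> x z *v blk Z z) = norm (blk Z z)"
      using orth_norm[OF orth[OF True]] by (simp add: norm_eq_sqrt_inner)
    then have "\<bar>nrm Z $ x - nrm Z $ z\<bar> \<le> norm (blk Z x - \<sigma> x z *v blk Z z)"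
      using norm_triangle_ineq3[of "blk Z x" "\<sigma> x z *v blk Z z"] by (simp add: nrm_def)
    then have "(nrm Z $ x - nrm Z $ z)\<^sup>2 \<le> (norm (blk Z x - \<sigma> x z *v blk Z z))\<^sup>2"
      by (metis abs_le_square_iff abs_norm_cancel)
    then show ?thesis using True by (simp add: mult_left_mono)
  next
    case False
    then have "w x z = 0" using wnn[of x z] by simp
    then show ?thesis by simp
  qed
  have "(\<Sum>x\<in>UNIV. \<Sum>z\<in>UNIV. w x z * (nrm Z $ x - nrm Z $ z)\<^sup>2)
      \<le> (\<Sum>x\<in>UNIV. \<Sum>z\<in>UNIV. w x z * (norm (blk Z x - \<sigma> x z *v blk Z z))\<^sup>2)"
    by (intro sum_mono tm)
  then show ?thesis unfolding quad_C quad_L by simp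
qed

end


lemma sym_inner': "transpose A = A \<Longrightarrow> P \<bullet> (A *v Z) = Z \<bullet> (A *v (P::real^'k::finite))"
  by (metis dot_lmul_matrix inner_commute transpose_matrix_vector)

lemma psd_cs:
  fixes A :: "real^'k::finite^'k"
  assumes sym: "transpose A = A" and psd: "\<And>u. u \<bullet> (A *v u) \<ge> 0"
  shows "(g \<bullet> (A *v f))\<^sup>2 \<le> (g \<bullet> (A *v g)) * (f \<bullet> (A *v f))"
proof -
  define a where "a = g \<bullet> (A *v g)"
  define b where "b = g \<bullet> (A *v f)"
  define c where "c = f \<bullet> (A *v f)"
  have fg: "f \<bullet> (A *v g) = b" unfolding b_def by (rule sym_inner'[OF sym])
  have q: "a + 2 * t * b + t\<^sup>2 * c \<ge> 0" for t
  proof -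
    have "0 \<le> (g + t *\<^sub>R f) \<bullet> (A *v (g + t *\<^sub>R f))" by (rule psd)
    also have "\<dots> = a + t * (f \<bullet> (A *v g)) + t * b + t * t * c"
      by (simp add: a_def b_def c_def matrix_vector_right_distrib matrix_vector_mult_scaleR
          inner_add_left inner_add_right algebra_simps)
    finally show ?thesis using fg by (simp add: power2_eq_square algebra_simps)
  qed
  have a0: "a \<ge> 0" using psd[of g] by (simp add: a_def)
  have c0: "c \<ge> 0" using psd[of f] by (simp add: c_def)
  show ?thesis
  proof (cases "c = 0")
    case True
    have "b = 0"
    proof (rule ccontr)
      assume "b \<noteq> 0"
      have "a + 2 * (- (a + 1) / (2 * b)) * b + (- (a + 1) / (2 * b))\<^sup>2 * c \<ge> 0" by (rule q)
      then show False using \<open>b \<noteq> 0\<close> True by (simp add: field_simps)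
    qed
    then show ?thesis using a0 c0 by (simp add: b_def[symmetric] a_def[symmetric] c_def[symmetric])
  next
    case False
    then have cp: "c > 0" using c0 by simp
    have "a + 2 * (- b / c) * b + (- b / c)\<^sup>2 * c \<ge> 0" by (rule q)
    then have "a - b\<^sup>2 / c \<ge> 0" using cp by (simp add: power2_eq_square field_simps)
    then have "b\<^sup>2 \<le> a * c" using cp by (simp add: field_simps)
    then show ?thesis by (simp add: a_def b_def c_def)
  qed
qed

context cgf begin

lemma L_const: assumes "L *v q = 0" shows "q $ x = q $ y"
proof -
  have "q \<bullet> (L *v q) = 0" using assms by simp
  then have "(\<Sum>x\<in>UNIV. \<Sum>z\<in>UNIV. w x z * (q$x - q$z)\<^sup>2) = 0" unfolding quad_L by simp
  then have "\<forall>x\<in>UNIV. (\<Sum>z\<in>UNIV. w x z * (q$x - q$z)\<^sup>2) = 0"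
    by (subst (asm) sum_nonneg_eq_0_iff) (auto intro!: sum_nonneg simp: wnn)
  then have "\<forall>x\<in>UNIV. \<forall>z\<in>UNIV. w x z * (q$x - q$z)\<^sup>2 = 0"
    by (subst (asm) sum_nonneg_eq_0_iff) (auto simp: wnn)
  then have edge: "w a b > 0 \<Longrightarrow> q $ a = q $ b" for a b
  proof -
    assume "w a b > 0" and "\<forall>x\<in>UNIV. \<forall>z\<in>UNIV. w x z * (q$x - q$z)\<^sup>2 = 0"
    then have "w a b * (q$a - q$b)\<^sup>2 = 0" by blast
    then show ?thesis using \<open>w a b > 0\<close> by simp
  qed
  have "((\<lambda>a b. w a b > 0)\<^sup>*\<^sup>*) x y" by (rule conn)
  then show ?thesis
    by (induction rule: rtranclp_induct) (auto dest: edge)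
qed

lemma sum_L: "(\<Sum>x\<in>UNIV. (L *v g) $ x) = 0"
proof -
  have "(\<Sum>x\<in>UNIV. (L *v g) $ x) = (\<Sum>x\<in>UNIV. gdeg w x * g $ x) - (\<Sum>x\<in>UNIV. \<Sum>z\<in>UNIV. w x z * g $ z)"
    by (simp add: lap_apply sum_subtractf)
  also have "\<dots> = 0" by (simp add: swap_sym)
  finally show ?thesis .
qed

abbreviation "XL \<equiv> pinv L"

lemma XL_pen: "penrose L XL" and XL_sym: "transpose XL = XL"
  using pinv_sym[OF L_sym] by auto

lemma v_range:
  fixes i j :: 'n
  defines "v \<equiv> axis i (1::real) - axis j 1"
  shows "L *v (XL *v v) = v"
proof -
  have p: "L ** XL ** L = L" "transpose (L ** XL) = L ** XL" using XL_pen by (auto simp: penrose_def)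
  have comm: "L ** XL = XL ** L"
    using p(2) by (simp add: matrix_transpose_mul XL_sym L_sym)
  have LLX: "L ** (L ** XL) = L" using p(1) comm by (simp add: matrix_mul_assoc)
  define q where "q = v - L *v (XL *v v)"
  have "L *v q = L *v v - (L ** (L ** XL)) *v v"
    by (simp add: q_def matrix_vector_mult_diff_distrib matrix_vector_mul_assoc)
  then have Lq: "L *v q = 0" using LLX by simp
  have qc: "q $ x = q $ i" for x using L_const[OF Lq] .
  have "(\<Sum>x\<in>UNIV. q $ x) = (\<Sum>x\<in>UNIV. v $ x) - (\<Sum>x\<in>UNIV. (L *v (XL *v v)) $ x)"
    by (simp add: q_def sum_subtractf)
  also have "(\<Sum>x\<in>UNIV. v $ x) = 0"
    by (simp add: v_def sum_subtractf axis_def)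
  finally have "(\<Sum>x\<in>UNIV. q $ x) = 0" by (simp add: sum_L)
  moreover have "(\<Sum>x\<in>UNIV. q $ x) = real CARD('n) * q $ i"
    by (subst sum.cong[OF refl qc]) simp
  ultimately have "real CARD('n) * q $ i = 0" by simp
  then have "q $ i = 0" by simp
  then have "q = 0" using qc by (simp add: vec_eq_iff)
  then show ?thesis by (simp add: q_def)
qed

lemma eff_res_bound:
  fixes i j :: 'n and f :: "real^'n"
  shows "(f $ i - f $ j)\<^sup>2 \<le> eff_res w i j * (f \<bullet> (L *v f))" and "eff_res w i j \<ge> 0"
proof -
  define v where "v = axis i (1::real) - axis j 1"
  define g where "g = XL *v v"
  have Lg: "L *v g = v" unfolding g_def v_def by (rule v_range)
  have p: "L ** XL ** L = L" using XL_pen by (auto simp: penrose_def)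
  have "eff_res w i j = v \<bullet> (XL *v v)" by (simp add: eff_res_def v_def Let_def)
  also have "\<dots> = (XL *v v) \<bullet> (L *v g)" unfolding Lg by (simp add: inner_commute)
  also have "\<dots> = g \<bullet> (L *v (XL *v v))" by (rule sym_inner[OF L_sym])
  also have "\<dots> = g \<bullet> (L *v g)" unfolding Lg[symmetric]
    by (simp add: matrix_vector_mul_assoc matrix_mul_assoc p)
  finally have r: "eff_res w i j = g \<bullet> (L *v g)" .
  show "eff_res w i j \<ge> 0" unfolding r by (rule L_psd)
  have "f $ i - f $ j = v \<bullet> f" by (simp add: v_def inner_diff_left inner_axis')
  also have "\<dots> = f \<bullet> (L *v g)" by (simp add: Lg inner_commute)
  also have "\<dots> = g \<bullet> (L *v f)" by (rule sym_inner[OF L_sym])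
  finally have "(f $ i - f $ j)\<^sup>2 = (g \<bullet> (L *v f))\<^sup>2" by simp
  also have "\<dots> \<le> (g \<bullet> (L *v g)) * (f \<bullet> (L *v f))" by (rule psd_cs[OF L_sym L_psd])
  finally show "(f $ i - f $ j)\<^sup>2 \<le> eff_res w i j * (f \<bullet> (L *v f))" by (simp add: r)
qed

end


lemma arith_key:
  fixes s r E :: real
  assumes "s\<^sup>2 \<le> r * E" "r \<ge> 0" "E \<ge> 0"
  shows "2 * s - E \<le> r"
proof (cases "r = 0")
  case True
  then have "s\<^sup>2 \<le> 0" using assms by simp
  then have "s = 0" by (simp add: power2_eq_square) (metis mult_le_0_iff not_square_less_zero order_antisym zero_le_square)
  then show ?thesis using assms True by simp
next
  case False
  then have rp: "r > 0" using assms by simp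
  show ?thesis
  proof (rule ccontr)
    assume "\<not> 2 * s - E \<le> r"
    then have "r * r < r * (2 * s - E)" using rp by (simp add: mult_strict_left_mono)
    then have "r * r < 2 * r * s - s\<^sup>2" using assms(1) by (simp add: algebra_simps)
    moreover have "0 \<le> (r - s)\<^sup>2" by simp
    ultimately show False by (simp add: power2_eq_square algebra_simps)
  qed
qed

lemma quad_sup:
  fixes C X :: "real^'k::finite^'k"
  assumes pen: "penrose C X" and Xs: "transpose X = X"
    and bnd: "\<And>Y. 2 * (n \<bullet> Y) - Y \<bullet> (C *v Y) \<le> K"
  shows "n \<bullet> (X *v n) \<le> K"
proof -
  have xcx: "X ** C ** X = X" using pen by (simp add: penrose_def)
  define y where "y = X *v n"
  have "y \<bullet> (C *v y) = (C *v y) \<bullet> (X *v n)" by (simp add: y_def inner_commute)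
  also have "\<dots> = n \<bullet> (X *v (C *v y))" by (rule sym_inner'[OF Xs])
  also have "\<dots> = n \<bullet> (X *v n)" by (simp add: y_def matrix_vector_mul_assoc matrix_mul_assoc xcx)
  finally have "y \<bullet> (C *v y) = n \<bullet> (X *v n)" .
  then have "2 * (n \<bullet> y) - y \<bullet> (C *v y) = n \<bullet> (X *v n)" by (simp add: y_def)
  then show ?thesis using bnd[of y] by simp
qed

lemma diag_entry:
  fixes N :: "real^'b::finite^'k::finite" and M :: "real^'k^'k"
  shows "(transpose N ** M ** N) $ b $ b = column b N \<bullet> (M *v column b N)"
  by (simp add: matrix_matrix_mult_def transpose_def column_def inner_vec_def matrix_vector_mult_def
      sum_distrib_left sum_distrib_right mult_ac) (subst sum.swap, simp add: mult_ac)

lemma mtrace_add: "mtrace (A + B) = mtrace A + mtrace B"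
  by (simp add: mtrace_def sum.distrib)

context cgf begin

abbreviation "XC \<equiv> pinv C"

lemma XC_pen: "penrose C XC" and XC_sym: "transpose XC = XC"
  using pinv_sym[OF C_sym] by auto

lemma inner_N:
  assumes ij: "i \<noteq> j"
  shows "column b (Nmat w \<sigma> i j) \<bullet> Y = (blk Y i - Omega0 w \<sigma> i j *v blk Y j) $ b"
proof -
  define n where "n = column b (Nmat w \<sigma> i j)"
  have bx: "blk n x \<bullet> blk Y x = (if x = i then Y $ (i,b) else 0)
      + (if x = j then - (Omega0 w \<sigma> i j *v blk Y j) $ b else 0)" for x
  proof -
    consider "x = i" | "x = j" | "x \<noteq> i" "x \<noteq> j" by blast
    then show ?thesis
    proof cases
      case 1
      have "blk n x \<bullet> blk Y x = (\<Sum>a\<in>UNIV. (if a = b then 1 else 0) * Y $ (i,a))"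
        using 1 by (simp add: n_def inner_vec_def Nmat_def column_def)
      then show ?thesis using 1 ij by (simp add: if_distrib if_distribR cong: if_cong)
    next
      case 2
      have "blk n x \<bullet> blk Y x = (\<Sum>a\<in>UNIV. - (Omega0 w \<sigma> i j $ b $ a) * Y $ (j,a))"
        using 2 ij by (simp add: n_def inner_vec_def Nmat_def column_def transpose_def)
      then show ?thesis using 2 ij
        by (simp add: matrix_vector_mult_def sum_negf)
    next
      case 3
      then show ?thesis by (simp add: n_def inner_vec_def Nmat_def column_def)
    qed
  qed
  have "n \<bullet> Y = (\<Sum>x\<in>UNIV. blk n x \<bullet> blk Y x)" by (rule inner_prod_blk)
  also have "\<dots> = Y $ (i,b) - (Omega0 w \<sigma> i j *v blk Y j) $ b"
    by (simp add: bx sum.distrib)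
  finally show ?thesis by (simp add: n_def)
qed

lemma col_bound:
  assumes ij: "i \<noteq> j"
  shows "column b (Nmat w \<sigma> i j) \<bullet> (XC *v column b (Nmat w \<sigma> i j)) \<le> eff_res w i j"
proof (rule quad_sup[OF XC_pen XC_sym])
  fix Y :: "real^('n \<times> 'd)"
  define Z where "Z = Y - Psi j (blk Y j)"
  define s where "s = (blk Z i) $ b"
  have Zi: "blk Z i = blk Y i - Omega0 w \<sigma> i j *v blk Y j"
    using energy_shift(3)[where Y=Y and j=j and i=i] by (simp add: Z_def)
  have Zj: "blk Z j = 0" using energy_shift(2)[where Y=Y and j=j] by (simp add: Z_def)
  have EZ: "Z \<bullet> (C *v Z) \<le> Y \<bullet> (C *v Y)" using energy_shift(1)[where Y=Y and j=j] by (simp add: Z_def)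
  have ns: "column b (Nmat w \<sigma> i j) \<bullet> Y = s" by (simp add: inner_N[OF ij] s_def Zi)
  define f where "f = nrm Z"
  have fj: "f $ j = 0" by (simp add: f_def nrm_def Zj)
  have fi: "\<bar>s\<bar> \<le> f $ i"
    using component_le_norm_cart[of "blk Z i" b] by (simp add: f_def nrm_def s_def)
  have "s\<^sup>2 \<le> (f $ i - f $ j)\<^sup>2" using fi fj
    by (metis abs_le_square_iff abs_of_nonneg abs_ge_zero order_trans diff_zero)
  also have "\<dots> \<le> eff_res w i j * (f \<bullet> (L *v f))" by (rule eff_res_bound(1))
  also have "\<dots> \<le> eff_res w i j * (Y \<bullet> (C *v Y))"
    using energy_nrm[of Z] EZ eff_res_bound(2)[of i j] by (simp add: f_def mult_left_mono)
  finally have "s\<^sup>2 \<le> eff_res w i j * (Y \<bullet> (C *v Y))" .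
  then show "2 * (column b (Nmat w \<sigma> i j) \<bullet> Y) - Y \<bullet> (C *v Y) \<le> eff_res w i j"
    unfolding ns by (rule arith_key[OF _ eff_res_bound(2) C_psd])
qed

lemma trace_bound:
  assumes ij: "i \<noteq> j"
  shows "mtrace (transpose (Wmat w \<sigma> i j) ** C ** Wmat w \<sigma> i j) \<le> real CARD('d) * eff_res w i j"
proof -
  define N where "N = Nmat w \<sigma> i j"
  have xcx: "XC ** C ** XC = XC" using XC_pen by (simp add: penrose_def)
  have "transpose (Wmat w \<sigma> i j) ** C ** Wmat w \<sigma> i j = transpose N ** (XC ** C ** XC) ** N"
    by (simp add: Wmat_def N_def matrix_transpose_mul XC_sym matrix_mul_assoc)
  also have "\<dots> = transpose N ** XC ** N" by (simp add: xcx)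
  finally have e: "transpose (Wmat w \<sigma> i j) ** C ** Wmat w \<sigma> i j = transpose N ** XC ** N" .
  have "mtrace (transpose N ** XC ** N) = (\<Sum>b\<in>UNIV. column b N \<bullet> (XC *v column b N))"
    by (simp add: mtrace_def diag_entry)
  also have "\<dots> \<le> (\<Sum>b\<in>(UNIV::'d set). eff_res w i j)"
    by (rule sum_mono) (simp add: N_def col_bound[OF ij])
  finally show ?thesis by (simp add: e)
qed

lemma eff_res_sym: "eff_res w j i = eff_res w i j"
proof -
  have e: "axis j (1::real) - axis i 1 = (-1::real) *\<^sub>R (axis i 1 - axis j 1)" by simp
  show ?thesis unfolding eff_res_def Let_def e
    by (simp only: matrix_vector_mult_scaleR inner_scaleR_left inner_scaleR_right)
qed

lemma main:
  assumes ij: "i \<noteq> j"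
  shows "conn_eff_res w \<sigma> i j \<le> eff_res w i j"
proof -
  have t1: "mtrace (transpose (Wmat w \<sigma> i j) ** C ** Wmat w \<sigma> i j) \<le> real CARD('d) * eff_res w i j"
    by (rule trace_bound[OF ij])
  have t2: "mtrace (transpose (Wmat w \<sigma> j i) ** C ** Wmat w \<sigma> j i) \<le> real CARD('d) * eff_res w i j"
    using trace_bound[of j i] ij by (simp add: eff_res_sym)
  have d: "real CARD('d) > 0" by simp
  have "conn_eff_res w \<sigma> i j = (mtrace (transpose (Wmat w \<sigma> i j) ** C ** Wmat w \<sigma> i j)
      + mtrace (transpose (Wmat w \<sigma> j i) ** C ** Wmat w \<sigma> j i)) / (2 * real CARD('d))"
    by (simp add: conn_eff_res_def mtrace_add)
  also have "\<dots> \<le> (2 * (real CARD('d) * eff_res w i j)) / (2 * real CARD('d))"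
    using t1 t2 d by (intro divide_right_mono) auto
  also have "\<dots> = eff_res w i j" using d by simp
  finally show ?thesis .
qed

end

theorem proposition6p12:
  fixes w :: "'n::finite \<Rightarrow> 'n \<Rightarrow> real" and \<sigma> :: "'n \<Rightarrow> 'n \<Rightarrow> real^'d::finite^'d"
    and i j :: 'n
  assumes "conn_graph w \<sigma>" and "i \<noteq> j"
  shows "conn_eff_res w \<sigma> i j \<le> eff_res w i j"
proof -
  have h1: "\<forall>x y. w x y = w y x" and h2: "\<forall>x y. w x y \<ge> 0"
    and h4: "\<forall>x y. ((\<lambda>a b. w a b > 0)\<^sup>*\<^sup>*) x y"
    and h5: "\<forall>x y. w x y > 0 \<longrightarrow> orthogonal_matrix (\<sigma> x y) \<and> \<sigma> y x = transpose (\<sigma> x y)"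
    using assms(1) unfolding conn_graph_def by blast+
  interpret cgf w \<sigma>
  proof (unfold_locales)
    show "\<And>x y. 0 \<le> w x y" using h2 by blast
    show "\<And>x y. 0 < w x y \<Longrightarrow> orthogonal_matrix (\<sigma> x y)" using h5 by blast
    show "\<And>x y. w x y = w y x" using h1 by blast
    show "\<And>x y. ((\<lambda>a b. w a b > 0)\<^sup>*\<^sup>*) x y" using h4 by blast
    show "\<And>x y. 0 < w x y \<Longrightarrow> \<sigma> y x = transpose (\<sigma> x y)" using h5 by blast
  qed
  show ?thesis by (rule main[OF assms(2)])
qed


end
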